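(* Let $D$ be a subsemigroup of $(\mathbb N_0,+)$. (a) $h\notin\mathcal I_D$ if and only if $0\in D$. (b) $\{w\mid w\text{ bracket pattern},\ \mathrm{Br}_\bullet(w)\in\mathcal I_D\}=\mathfrak W_{D\cup\{0\}}$.
   Context: $\mathbb N=\{1,2,\dots\}$, $\mathbb N_0=\mathbb N\cup\{0\}$. A (two-colored) partition $p$ consists of two finite totally ordered sets $U$ (upper row, left to right) and $L$ (lower row), a decomposition of $U\sqcup L$ (the points) into non-empty pairwise disjoint blocks, and a coloring of each point by $\circ$ or $\bullet$. A pair partition has only two-point blocks. On the points of $p$ consider the cyclic order obtained by traversing the lower row left to right and then the upper row right to left. $]\alpha,\beta[$: points strictly after $\alpha$ and before $\beta$ in this cyclic order; $]\alpha,\beta]:=]\alpha,\beta[\cup\{\beta\}$ for $\alpha\ne\beta$, $]\alpha,\alpha]:=\emptyset$. Normalized color: the color for lower points, the opposite color for upper points. $\sigma_p(S)$ = #normalized-$\circ$ points of $S$ $-$ #normalized-$\bullet$ points of $S$. Distinct blocks $B,B'$ cross if there are $\alpha,\beta\in B,\gamma,\delta\in B'$ in cyclic order $\alpha,\gamma,\beta,\delta$. $\mathcal P^{\circ\bullet}_{2,\mathrm{nb}}$: pair partitions each block of which has one point of each normalized color. $\mathcal S_0$: those $p\in\mathcal P^{\circ\bullet}_{2,\mathrm{nb}}$ with $\sigma_p(]\alpha,\beta[)=0$ for all blocks $\{\alpha,\beta\}$. For $p\in\mathcal S_0$: $\delta_p(\alpha,\beta)=\sigma_p(]\alpha,\beta[)$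 for different normalized colors, $\sigma_p(]\alpha,\beta])$ for equal ones; $d_p(B,B')=|\delta_p(\alpha,\alpha')|$ for any $\alpha\in B,\alpha'\in B'$ (well defined). A subsemigroup of $(\mathbb N_0,+)$ is a possibly empty subset closed under addition. $\mathcal I_D$: all $p\in\mathcal S_0$ with $d_p(B,B')\notin D$ for all crossing blocks $B,B'$. $h$ is the partition with upper row $\circ\bullet\circ$ and lower row $\circ\bullet\circ$ whose blocks are $\{$1st lower, 3rd upper$\}$, $\{$2nd lower, 2nd upper$\}$, $\{$3rd lower, 1st upper$\}$. A bracket pattern is a non-empty finite subset $w\subseteq\mathbb N$; $\|w\|:=\max(w)$. Its completion is $A(w):=\{j-i\mid j\in w,\ i\in\mathbb N_0,\ i\notin w,\ i<j\}$. For a submonoid $M$ of $(\mathbb N_0,+)$, $\mathfrak W_M:=\{w\mid w\text{ bracket pattern},\ A(w)\subseteq\mathbb N_0\setminus M\}$. For a bracket pattern $w$ with $m=\|w\|$, $\mathrm{Br}_\bullet(w)$ is the partition whose lower row, left to right, is $b_m,\dots,b_1,b_0,c_0,c_1,\dots,c_m$ and upper row $b'_m,\dots,b'_0,c'_0,\dots,c'_m$, all $b_k,b'_k$ black and all $c_k,c'_k$ white, with blocks $\{b_k,c_k\},\{b'_k,c'_k\}$ for $k\in w$ and $\{b_k,b'_k\},\{c_k,c'_k\}$ for $0\le k\le m$, $k\notin w$. *)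

theory Defs
  imports Main
begin

text \<open>Points: (False, i) is the i-th lower point (0-based, left to right),
  (True, i) is the i-th upper point (0-based, left to right).
  Colours: True = white (circ), False = black (bullet).\<close>

type_synonym pt = "bool \<times> nat"

record part =
  up :: nat
  low :: nat
  blocks :: "pt set set"
  col :: "pt \<Rightarrow> bool"

definition pts :: "part \<Rightarrow> pt set" where
  "pts p = {(False, i) | i. i < low p} \<union> {(True, i) | i. i < up p}"

text \<open>Position in the cyclic order: lower row left to right, then upper row right to left.\<close>
definition pos :: "part \<Rightarrow> pt \<Rightarrow> nat" where
  "pos p x = (if fst x then low p + up p - 1 - snd x else snd x)"

definition oint :: "part \<Rightarrow> pt \<Rightarrow> pt \<Rightarrow> pt set" where
  "oint p a b = {g \<in> pts p.
     if pos p a < pos p b then pos p a < pos p g \<and> pos p g < pos p b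
     else if pos p b < pos p a then pos p a < pos p g \<or> pos p g < pos p b
     else pos p g \<noteq> pos p a}"

definition cint :: "part \<Rightarrow> pt \<Rightarrow> pt \<Rightarrow> pt set" where
  "cint p a b = (if a = b then {} else oint p a b \<union> {b})"

definition ncol :: "part \<Rightarrow> pt \<Rightarrow> bool" where
  "ncol p x = (if fst x then \<not> col p x else col p x)"

definition sigma :: "part \<Rightarrow> pt set \<Rightarrow> int" where
  "sigma p S = int (card {x \<in> S. ncol p x}) - int (card {x \<in> S. \<not> ncol p x})"

definition is_partition :: "part \<Rightarrow> bool" where
  "is_partition p \<longleftrightarrow>
     (\<forall>B \<in> blocks p. B \<noteq> {} \<and> B \<subseteq> pts p) \<and> \<Union>(blocks p) = pts p \<and>
     (\<forall>B \<in> blocks p. \<forall>B' \<in> blocks p. B \<noteq> B' \<longrightarrow> B \<inter> B' = {})"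

definition P2nb :: "part \<Rightarrow> bool" where
  "P2nb p \<longleftrightarrow> is_partition p \<and>
     (\<forall>B \<in> blocks p. \<exists>a b. B = {a, b} \<and> a \<noteq> b \<and> ncol p a \<noteq> ncol p b)"

definition S0 :: "part \<Rightarrow> bool" where
  "S0 p \<longleftrightarrow> P2nb p \<and>
     (\<forall>B \<in> blocks p. \<forall>a \<in> B. \<forall>b \<in> B. a \<noteq> b \<longrightarrow> sigma p (oint p a b) = 0)"

definition delta :: "part \<Rightarrow> pt \<Rightarrow> pt \<Rightarrow> int" where
  "delta p a b = (if ncol p a \<noteq> ncol p b then sigma p (oint p a b) else sigma p (cint p a b))"

definition dd :: "part \<Rightarrow> pt set \<Rightarrow> pt set \<Rightarrow> nat" where
  "dd p B B' = nat \<bar>delta p (SOME a. a \<in> B) (SOME b. b \<in> B')\<bar>"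

definition crosses :: "part \<Rightarrow> pt set \<Rightarrow> pt set \<Rightarrow> bool" where
  "crosses p B B' \<longleftrightarrow> B \<noteq> B' \<and>
     (\<exists>a \<in> B. \<exists>b \<in> B. \<exists>g \<in> B'. \<exists>d \<in> B'. a \<noteq> b \<and> g \<in> oint p a b \<and> d \<in> oint p b a)"

definition ID :: "nat set \<Rightarrow> part set" where
  "ID D = {p. S0 p \<and> (\<forall>B \<in> blocks p. \<forall>B' \<in> blocks p. crosses p B B' \<longrightarrow> dd p B B' \<notin> D)}"

definition subsemigroup :: "nat set \<Rightarrow> bool" where
  "subsemigroup D \<longleftrightarrow> (\<forall>x \<in> D. \<forall>y \<in> D. x + y \<in> D)"

definition hpart :: part where
  "hpart = \<lparr> up = 3, low = 3,
     blocks = {{(False, 0), (True, 2)}, {(False, 1), (True, 1)}, {(False, 2), (True, 0)}},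
     col = (\<lambda>x. snd x \<noteq> 1) \<rparr>"

definition bracket_pattern :: "nat set \<Rightarrow> bool" where
  "bracket_pattern w \<longleftrightarrow> finite w \<and> w \<noteq> {} \<and> 0 \<notin> w"

definition completion :: "nat set \<Rightarrow> nat set" where
  "completion w = {j - i | j i. j \<in> w \<and> i \<notin> w \<and> i < j}"

definition WM :: "nat set \<Rightarrow> nat set set" where
  "WM M = {w. bracket_pattern w \<and> completion w \<subseteq> - M}"

text \<open>Br_bullet(w), m = max w: each row is b_m..b_0 c_0..c_m, i.e. b_k at index m-k,
  c_k at index m+1+k; b black, c white.\<close>
definition Br :: "nat set \<Rightarrow> part" where
  "Br w = (let m = Max w;
              bl = (\<lambda>r k. (r, m - k)); cl = (\<lambda>r k. (r, m + 1 + k)) in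
     \<lparr> up = 2 * (m + 1), low = 2 * (m + 1),
       blocks = {{bl False k, cl False k} | k. k \<in> w} \<union> {{bl True k, cl True k} | k. k \<in> w}
              \<union> {{bl False k, bl True k} | k. k \<le> m \<and> k \<notin> w}
              \<union> {{cl False k, cl True k} | k. k \<le> m \<and> k \<notin> w},
       col = (\<lambda>x. m + 1 \<le> snd x) \<rparr>)"

end

theory Submission
  imports Defs
begin

definition LL :: "part \<Rightarrow> nat" where "LL p = low p + up p"
definition ipos :: "part \<Rightarrow> nat \<Rightarrow> pt" where
  "ipos p q = (if q < low p then (False, q) else (True, low p + up p - 1 - q))"

lemma pos_lt: "x \<in> pts p \<Longrightarrow> pos p x < LL p"
  by (auto simp: pts_def pos_def LL_def)
lemma ipos_pos: "x \<in> pts p \<Longrightarrow> ipos p (pos p x) = x"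
  by (auto simp: pts_def pos_def ipos_def)
lemma pos_ipos: "q < LL p \<Longrightarrow> pos p (ipos p q) = q"
  by (auto simp: LL_def pos_def ipos_def)
lemma ipos_pts: "q < LL p \<Longrightarrow> ipos p q \<in> pts p"
  by (auto simp: LL_def pts_def ipos_def)
lemma inj_ipos: "inj_on (ipos p) {..<LL p}"
  by (metis inj_onI lessThan_iff pos_ipos)
lemma ipos_eq_iff: "q < LL p \<Longrightarrow> r < LL p \<Longrightarrow> ipos p q = ipos p r \<longleftrightarrow> q = r"
  by (metis pos_ipos)
lemma pts_eq: "pts p = ipos p ` {..<LL p}"
proof
  show "pts p \<subseteq> ipos p ` {..<LL p}"
  proof
    fix x assume "x \<in> pts p"
    then show "x \<in> ipos p ` {..<LL p}"
      by (metis ipos_pos pos_lt image_eqI lessThan_iff)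
  qed
  show "ipos p ` {..<LL p} \<subseteq> pts p" using ipos_pts by auto
qed
lemma finite_pts: "finite (pts p)"
  by (simp add: pts_eq)

definition incyc :: "nat \<Rightarrow> nat \<Rightarrow> nat \<Rightarrow> bool" where
  "incyc a b g = (if a < b then a < g \<and> g < b else if b < a then a < g \<or> g < b else g \<noteq> a)"

lemma oint_alt: "oint p a b = {g \<in> pts p. incyc (pos p a) (pos p b) (pos p g)}"
  by (simp add: oint_def incyc_def)

lemma oint_img: "oint p a b = ipos p ` {q. q < LL p \<and> incyc (pos p a) (pos p b) q}"
proof
  show "oint p a b \<subseteq> ipos p ` {q. q < LL p \<and> incyc (pos p a) (pos p b) q}"
    unfolding oint_alt
    by (auto intro!: image_eqI[where x="pos p _"] simp: ipos_pos pos_lt)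
  show "ipos p ` {q. q < LL p \<and> incyc (pos p a) (pos p b) q} \<subseteq> oint p a b"
    unfolding oint_alt by (auto simp: ipos_pts pos_ipos)
qed

definition sg :: "part \<Rightarrow> nat \<Rightarrow> int" where
  "sg p q = (if ncol p (ipos p q) then 1 else -1)"
definition FF :: "part \<Rightarrow> nat \<Rightarrow> int" where
  "FF p q = (\<Sum>r<q. sg p r)"

lemma FF_Suc: "FF p (Suc q) = FF p q + sg p q"
  by (simp add: FF_def)
lemma FF_0: "FF p 0 = 0"
  by (simp add: FF_def)

lemma card_filter_int: "finite S \<Longrightarrow> int (card {x \<in> S. P x}) = (\<Sum>x\<in>S. if P x then 1 else 0)"
proof -
  assume f: "finite S"
  have "int (card {x \<in> S. P x}) = (\<Sum>x\<in>{x \<in> S. P x}. (1::int))" by simp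
  also have "\<dots> = (\<Sum>x\<in>S. if P x then 1 else 0)" using f by (rule sum.inter_filter)
  finally show ?thesis .
qed

lemma sigma_sum: "finite S \<Longrightarrow> sigma p S = (\<Sum>x\<in>S. if ncol p x then 1 else -1)"
proof -
  assume f: "finite S"
  have "sigma p S = (\<Sum>x\<in>S. if ncol p x then 1 else 0) - (\<Sum>x\<in>S. if \<not> ncol p x then 1 else (0::int))"
    unfolding sigma_def using card_filter_int[OF f] by presburger
  also have "\<dots> = (\<Sum>x\<in>S. (if ncol p x then 1 else 0) - (if \<not> ncol p x then 1 else (0::int)))"
    by (rule sum_subtractf[symmetric])
  also have "\<dots> = (\<Sum>x\<in>S. if ncol p x then 1 else -1)"
    by (rule sum.cong) auto
  finally show ?thesis .
qed

lemma sigma_img: "Q \<subseteq> {..<LL p} \<Longrightarrow> sigma p (ipos p ` Q) = (\<Sum>q\<in>Q. sg p q)"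
proof -
  assume Q: "Q \<subseteq> {..<LL p}"
  then have fin: "finite Q" by (meson finite_lessThan finite_subset)
  have inj: "inj_on (ipos p) Q" using inj_ipos Q by (rule inj_on_subset)
  have "sigma p (ipos p ` Q) = (\<Sum>x\<in>ipos p ` Q. if ncol p x then 1 else -1)"
    using fin by (intro sigma_sum) simp
  also have "\<dots> = (\<Sum>q\<in>Q. if ncol p (ipos p q) then 1 else -1)"
    using inj by (simp add: sum.reindex)
  finally show ?thesis by (simp add: sg_def)
qed

lemma sum_ivl: "a \<le> b \<Longrightarrow> (\<Sum>q\<in>{a..<b}. sg p q) = FF p b - FF p a"
proof -
  assume "a \<le> b"
  then have "(\<Sum>q\<in>{0..<a}. sg p q) + (\<Sum>q\<in>{a..<b}. sg p q) = (\<Sum>q\<in>{0..<b}. sg p q)"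
    by (intro sum.atLeastLessThan_concat) auto
  then show ?thesis by (simp add: FF_def atLeast0LessThan)
qed

lemma sigma_oint:
  assumes a: "a \<in> pts p" and b: "b \<in> pts p" and ab: "a \<noteq> b"
  shows "sigma p (oint p a b) = FF p (pos p b) - FF p (Suc (pos p a))
           + (if pos p b < pos p a then FF p (LL p) else 0)"
proof -
  define pa where "pa = pos p a"
  define pb where "pb = pos p b"
  have pa: "pa < LL p" using a pos_lt pa_def by blast
  have pb: "pb < LL p" using b pos_lt pb_def by blast
  have ne: "pa \<noteq> pb" using a b ab ipos_pos pa_def pb_def by metis
  show ?thesis
  proof (cases "pa < pb")
    case True
    have "{q. q < LL p \<and> incyc pa pb q} = {Suc pa..<pb}"
      using True pb by (auto simp: incyc_def)
    moreover have "{Suc pa..<pb} \<subseteq> {..<LL p}" using pb by auto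
    ultimately show ?thesis
      using True pb by (simp add: oint_img sigma_img pa_def[symmetric] pb_def[symmetric] sum_ivl)
  next
    case False
    then have lt: "pb < pa" using ne by simp
    have "{q. q < LL p \<and> incyc pa pb q} = {Suc pa..<LL p} \<union> {0..<pb}"
      using lt pa by (auto simp: incyc_def)
    moreover have "(\<Sum>q\<in>{Suc pa..<LL p} \<union> {0..<pb}. sg p q) =
        (\<Sum>q\<in>{Suc pa..<LL p}. sg p q) + (\<Sum>q\<in>{0..<pb}. sg p q)"
      using lt by (intro sum.union_disjoint) auto
    moreover have "{Suc pa..<LL p} \<union> {0..<pb} \<subseteq> {..<LL p}" using lt pa by auto
    ultimately show ?thesis
      using lt pa by (simp add: oint_img sigma_img pa_def[symmetric] pb_def[symmetric] sum_ivl FF_0)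
  qed
qed

lemma sigma_cint:
  assumes a: "a \<in> pts p" and b: "b \<in> pts p" and ab: "a \<noteq> b"
  shows "sigma p (cint p a b) = sigma p (oint p a b) + sg p (pos p b)"
proof -
  have nb: "b \<notin> oint p a b" by (auto simp: oint_alt incyc_def)
  have fin: "finite (oint p a b)" using finite_pts by (simp add: oint_def)
  have "cint p a b = insert b (oint p a b)" using ab by (simp add: cint_def)
  then show ?thesis using nb fin b by (simp add: sigma_sum sg_def ipos_pos)
qed

lemma delta_eq:
  assumes a: "a \<in> pts p" and b: "b \<in> pts p" and ab: "a \<noteq> b" and L: "FF p (LL p) = 0"
  shows "delta p a b = FF p (pos p b + (if ncol p a = ncol p b then 1 else 0)) - FF p (Suc (pos p a))"
  using sigma_oint[OF a b ab] sigma_cint[OF a b ab] L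
  by (simp add: delta_def FF_Suc)

lemma ipos_in_oint: "s < LL p \<Longrightarrow> t < LL p \<Longrightarrow> q < LL p \<Longrightarrow> incyc s t q \<Longrightarrow>
  ipos p q \<in> oint p (ipos p s) (ipos p t)"
  by (simp add: oint_alt ipos_pts pos_ipos)

lemma cross_num:
  assumes "x < y" "u < v" "pa \<in> {x,y}" "pb \<in> {x,y}" "pa \<noteq> pb" "pg \<in> {u,v}" "pd \<in> {u,v}"
    "incyc pa pb pg" "incyc pb pa pd"
  shows "(x < u \<and> u < y \<and> y < v) \<or> (u < x \<and> x < v \<and> v < y)"
  using assms unfolding incyc_def by (auto split: if_splits)

lemma cross_iff:
  assumes "x < y" "y < LL p" "u < v" "v < LL p"
  shows "crosses p {ipos p x, ipos p y} {ipos p u, ipos p v} \<longleftrightarrow>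
         (x < u \<and> u < y \<and> y < v) \<or> (u < x \<and> x < v \<and> v < y)"
proof
  assume "crosses p {ipos p x, ipos p y} {ipos p u, ipos p v}"
  then obtain a b g d where ab: "a \<in> {ipos p x, ipos p y}" "b \<in> {ipos p x, ipos p y}" "a \<noteq> b"
    and gd: "g \<in> {ipos p u, ipos p v}" "d \<in> {ipos p u, ipos p v}"
    and o: "g \<in> oint p a b" "d \<in> oint p b a"
    unfolding crosses_def by blast
  show "(x < u \<and> u < y \<and> y < v) \<or> (u < x \<and> x < v \<and> v < y)"
  proof (rule cross_num)
    show "pos p a \<in> {x,y}" "pos p b \<in> {x,y}" "pos p g \<in> {u,v}" "pos p d \<in> {u,v}"
      using ab gd assms by (auto simp: pos_ipos)
    show "pos p a \<noteq> pos p b" using ab assms by (auto simp: pos_ipos)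
    show "incyc (pos p a) (pos p b) (pos p g)" "incyc (pos p b) (pos p a) (pos p d)"
      using o by (auto simp: oint_alt)
  qed (use assms in auto)
next
  assume c: "(x < u \<and> u < y \<and> y < v) \<or> (u < x \<and> x < v \<and> v < y)"
  have ne: "{ipos p x, ipos p y} \<noteq> {ipos p u, ipos p v}"
  proof
    assume "{ipos p x, ipos p y} = {ipos p u, ipos p v}"
    then have "ipos p u \<in> {ipos p x, ipos p y}" by blast
    then show False using c assms ipos_eq_iff[of _ p] by (auto)
  qed
  show "crosses p {ipos p x, ipos p y} {ipos p u, ipos p v}"
    unfolding crosses_def
  proof (intro conjI ne)
    show "\<exists>a\<in>{ipos p x, ipos p y}. \<exists>b\<in>{ipos p x, ipos p y}. \<exists>g\<in>{ipos p u, ipos p v}.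
          \<exists>d\<in>{ipos p u, ipos p v}. a \<noteq> b \<and> g \<in> oint p a b \<and> d \<in> oint p b a"
      using c
    proof
      assume h: "x < u \<and> u < y \<and> y < v"
      show ?thesis
        apply (rule bexI[of _ "ipos p x"], rule bexI[of _ "ipos p y"], rule bexI[of _ "ipos p u"],
            rule bexI[of _ "ipos p v"])
        using h assms by (auto simp: ipos_eq_iff intro!: ipos_in_oint simp: incyc_def)
    next
      assume h: "u < x \<and> x < v \<and> v < y"
      show ?thesis
        apply (rule bexI[of _ "ipos p x"], rule bexI[of _ "ipos p y"], rule bexI[of _ "ipos p v"],
            rule bexI[of _ "ipos p u"])
        using h assms by (auto simp: ipos_eq_iff intro!: ipos_in_oint simp: incyc_def)
    qed
  qed
qed

lemma dd_prop:
  assumes "\<And>s t. s \<in> {x, y} \<Longrightarrow> t \<in> {u, v} \<Longrightarrow> P (nat \<bar>delta p (ipos p s) (ipos p t)\<bar>)"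
  shows "P (dd p {ipos p x, ipos p y} {ipos p u, ipos p v})"
proof -
  have "(SOME a. a \<in> {ipos p x, ipos p y}) \<in> {ipos p x, ipos p y}" by (rule someI[of _ "ipos p x"]) simp
  then obtain s where s: "s \<in> {x, y}" "(SOME a. a \<in> {ipos p x, ipos p y}) = ipos p s" by blast
  have "(SOME a. a \<in> {ipos p u, ipos p v}) \<in> {ipos p u, ipos p v}" by (rule someI[of _ "ipos p u"]) simp
  then obtain t where t: "t \<in> {u, v}" "(SOME a. a \<in> {ipos p u, ipos p v}) = ipos p t" by blast
  show ?thesis using assms[OF s(1) t(1)] s t by (simp add: dd_def)
qed


lemma chord_P2: "x < LL p \<Longrightarrow> y < LL p \<Longrightarrow> x \<noteq> y \<Longrightarrow> ncol p (ipos p x) \<noteq> ncol p (ipos p y) \<Longrightarrow>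
  \<exists>a b. {ipos p x, ipos p y} = {a, b} \<and> a \<noteq> b \<and> ncol p a \<noteq> ncol p b"
  by (metis ipos_eq_iff)

section \<open>Part (a)\<close>

lemma h_simps: "low hpart = 3" "up hpart = 3" "LL hpart = 6"
  by (simp_all add: hpart_def LL_def)

lemma h_ipos: "ipos hpart q = (if q < 3 then (False, q) else (True, 5 - q))"
  by (simp add: ipos_def h_simps)

lemma h_ncol: "q < 6 \<Longrightarrow> ncol hpart (ipos hpart q) = even q"
  unfolding h_ipos ncol_def
  by (simp add: hpart_def) presburger

lemma h_FF: "q \<le> 6 \<Longrightarrow> FF hpart q = (if even q then 0 else 1)"
proof (induction q)
  case 0 then show ?case by (simp add: FF_0)
next
  case (Suc q)
  then show ?case by (simp add: FF_Suc sg_def h_ncol)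
qed

lemma h_pts: "pts hpart = ipos hpart ` {..<6}"
  using pts_eq[of hpart] by (simp add: h_simps)

lemma h_delta0:
  assumes a: "a \<in> pts hpart" and b: "b \<in> pts hpart"
  shows "delta hpart a b = 0"
proof (cases "a = b")
  case True
  then show ?thesis by (simp add: delta_def cint_def sigma_def)
next
  case False
  obtain s where s: "s < 6" "a = ipos hpart s" using a h_pts by auto
  obtain t where t: "t < 6" "b = ipos hpart t" using b h_pts by auto
  have L: "FF hpart (LL hpart) = 0" by (simp add: h_simps h_FF)
  have "delta hpart a b = FF hpart (t + (if even s = even t then 1 else 0)) - FF hpart (Suc s)"
    using delta_eq[OF a b False L] s t by (simp add: pos_ipos h_simps h_ncol)
  also have "\<dots> = 0"
    using s(1) t(1) by (simp add: h_FF)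
  finally show ?thesis .
qed

lemma h_blocks: "blocks hpart = {{ipos hpart 0, ipos hpart 3}, {ipos hpart 1, ipos hpart 4}, {ipos hpart 2, ipos hpart 5}}"
  by (simp only: h_ipos) (simp add: hpart_def insert_commute)

lemma h_blocks_sub: "B \<in> blocks hpart \<Longrightarrow> B \<subseteq> pts hpart"
  unfolding h_blocks by (auto simp: h_pts)

lemma h_dd0: "B \<in> blocks hpart \<Longrightarrow> B' \<in> blocks hpart \<Longrightarrow> dd hpart B B' = 0"
proof -
  assume B: "B \<in> blocks hpart" and B': "B' \<in> blocks hpart"
  have ne: "B \<noteq> {}" "B' \<noteq> {}" using B B' unfolding h_blocks by auto
  have "(SOME a. a \<in> B) \<in> B" using ne(1) by (simp add: some_in_eq)
  moreover have "(SOME a. a \<in> B') \<in> B'" using ne(2) by (simp add: some_in_eq)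
  ultimately have "delta hpart (SOME a. a \<in> B) (SOME a. a \<in> B') = 0"
    using h_blocks_sub[OF B] h_blocks_sub[OF B'] by (intro h_delta0) auto
  then show ?thesis by (simp add: dd_def)
qed

lemma h_oint0: "s < 6 \<Longrightarrow> t < 6 \<Longrightarrow> odd (s + t) \<Longrightarrow> sigma hpart (oint hpart (ipos hpart s) (ipos hpart t)) = 0"
proof -
  assume st: "s < 6" "t < 6" "odd (s + t)"
  then have ne: "ipos hpart s \<noteq> ipos hpart t" by (auto simp: ipos_eq_iff h_simps)
  show ?thesis
    using sigma_oint[OF ipos_pts ipos_pts ne] st
    by (simp add: h_simps pos_ipos h_FF)
qed

lemma h_pts2: "pts hpart = {(False,0),(False,1),(False,2),(True,0),(True,1),(True,2)}"
  by (auto simp: pts_def h_simps less_Suc_eq numeral_3_eq_3)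

lemma h_S0: "S0 hpart"
proof -
  have part: "is_partition hpart"
    unfolding is_partition_def h_blocks h_pts2
    by (auto simp: h_ipos)
  have c1: "\<exists>a b. {ipos hpart 0, ipos hpart 3} = {a, b} \<and> a \<noteq> b \<and> ncol hpart a \<noteq> ncol hpart b"
    by (rule chord_P2) (simp_all add: h_simps h_ncol)
  have c2: "\<exists>a b. {ipos hpart 1, ipos hpart 4} = {a, b} \<and> a \<noteq> b \<and> ncol hpart a \<noteq> ncol hpart b"
    by (rule chord_P2) (simp_all add: h_simps h_ncol)
  have c3: "\<exists>a b. {ipos hpart 2, ipos hpart 5} = {a, b} \<and> a \<noteq> b \<and> ncol hpart a \<noteq> ncol hpart b"
    by (rule chord_P2) (simp_all add: h_simps h_ncol)
  have p2: "P2nb hpart"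
    unfolding P2nb_def h_blocks using part c1 c2 c3 by (simp only: ball_simps h_blocks)
  show ?thesis
    unfolding S0_def using p2
    by (auto simp: h_blocks h_oint0)
qed

lemma h_cross: "crosses hpart {ipos hpart 0, ipos hpart 3} {ipos hpart 1, ipos hpart 4}"
  by (subst cross_iff) (simp_all add: h_simps)

lemma partA: "hpart \<notin> ID D \<longleftrightarrow> 0 \<in> D"
proof
  assume "hpart \<notin> ID D"
  then obtain B B' where "B \<in> blocks hpart" "B' \<in> blocks hpart" "dd hpart B B' \<in> D"
    using h_S0 unfolding ID_def by auto
  then show "0 \<in> D" using h_dd0 by metis
next
  assume "0 \<in> D"
  then show "hpart \<notin> ID D"
    unfolding ID_def using h_cross h_dd0 h_blocks by auto
qed


section \<open>Part (b)\<close>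

definition iB :: "nat \<Rightarrow> nat \<Rightarrow> pt" where
  "iB m q = (if q < 2*m+2 then (False, q) else (True, 4*m+3-q))"
definition ncm :: "nat \<Rightarrow> nat \<Rightarrow> bool" where
  "ncm m q = ((m + 1 \<le> q \<and> q < 2*m+2) \<or> 3*m+3 \<le> q)"
definition kap :: "nat \<Rightarrow> nat \<Rightarrow> nat" where
  "kap m q = (if q \<le> m then m - q else if q \<le> 2*m+1 then q - m - 1
     else if q \<le> 3*m+2 then 3*m+2-q else q - 3*m - 3)"
definition Tm :: "nat \<Rightarrow> nat \<Rightarrow> int" where
  "Tm m q = (if q \<le> m+1 then - int q else if q \<le> 2*m+2 then int q - 2*int m - 2
     else if q \<le> 3*m+3 then 2*int m + 2 - int q else int q - 4 * int m - 4)"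
definition ch :: "nat \<Rightarrow> nat \<Rightarrow> nat \<Rightarrow> pt set" where
  "ch m x y = {iB m x, iB m y}"
definition TB :: "nat \<Rightarrow> nat set \<Rightarrow> nat \<Rightarrow> nat \<Rightarrow> nat \<Rightarrow> bool" where
  "TB m w k x y = (k \<le> m \<and> ((k \<in> w \<and> (x = m-k \<and> y = m+1+k \<or> x = 3*m+2-k \<and> y = 3*m+3+k)) \<or>
      (k \<notin> w \<and> (x = m-k \<and> y = 3*m+3+k \<or> x = m+1+k \<and> y = 3*m+2-k))))"
definition cr :: "nat \<Rightarrow> nat \<Rightarrow> nat \<Rightarrow> nat \<Rightarrow> bool" where
  "cr x y u v = ((x < u \<and> u < y \<and> y < v) \<or> (u < x \<and> x < v \<and> v < y))"

lemma TmA: "q < 4*m+4 \<Longrightarrow> Tm m q = int (kap m q) - int m - (if ncm m q then 1 else 0)"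
  unfolding Tm_def kap_def ncm_def by auto

lemma TmB: "q < 4*m+4 \<Longrightarrow> Tm m (Suc q) = int (kap m q) - int m - (if ncm m q then 0 else 1)"
  unfolding Tm_def kap_def ncm_def by auto

lemma TmL: "Tm m (4*m+4) = 0"
  unfolding Tm_def by auto

lemma TmStep: "q < 4*m+4 \<Longrightarrow> Tm m (Suc q) = Tm m q + (if ncm m q then 1 else -1)"
  using TmA[of q m] TmB[of q m] by simp

lemma TB_good: "TB m w k x y \<Longrightarrow> x < y \<and> y < 4*m+4 \<and> kap m x = k \<and> kap m y = k \<and> ncm m x \<noteq> ncm m y"
  unfolding TB_def kap_def ncm_def by auto

lemma TB_meet:
  assumes a: "TB m w k x y" and b: "TB m w j u v" and c: "x = u \<or> x = v \<or> y = u \<or> y = v"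
  shows "x = u \<and> y = v"
proof -
  have "k = j" using TB_good[OF a] TB_good[OF b] c by auto
  then show ?thesis using a b c unfolding TB_def by auto
qed

lemma TB_cross: "TB m w k x y \<Longrightarrow> TB m w j u v \<Longrightarrow> cr x y u v \<Longrightarrow>
   (k \<in> w \<and> j \<notin> w \<and> j < k) \<or> (j \<in> w \<and> k \<notin> w \<and> k < j)"
  unfolding TB_def cr_def by auto

lemma TB_cover: "q < 4*m+4 \<Longrightarrow> \<exists>k x y. TB m w k x y \<and> (q = x \<or> q = y)"
proof -
  assume q: "q < 4*m+4"
  consider "q \<le> m" | "m+1 \<le> q \<and> q \<le> 2*m+1" | "2*m+2 \<le> q \<and> q \<le> 3*m+2" | "3*m+3 \<le> q"
    by linarith
  then show ?thesis
  proof cases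
    case 1
    then show ?thesis
      by (cases "m - q \<in> w") (rule exI[of _ "m-q"], force simp: TB_def)+
  next
    case 2
    then show ?thesis
      by (cases "q-m-1 \<in> w") (rule exI[of _ "q-m-1"], force simp: TB_def)+
  next
    case 3
    then show ?thesis
      by (cases "3*m+2-q \<in> w") (rule exI[of _ "3*m+2-q"], force simp: TB_def)+
  next
    case 4
    then show ?thesis using q
      by (cases "q-3*m-3 \<in> w") (rule exI[of _ "q-3*m-3"], force simp: TB_def)+
  qed
qed

lemma Br_simps: "low (Br w) = 2*Max w+2" "up (Br w) = 2*Max w+2"
  "col (Br w) = (\<lambda>x. Max w + 1 \<le> snd x)" "LL (Br w) = 4*Max w+4"
  by (simp_all add: Br_def Let_def LL_def)

lemma Br_ipos: "ipos (Br w) = iB (Max w)"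
proof
  fix q
  have "2 * Max w + 2 + (2 * Max w + 2) - 1 = 4 * Max w + 3" by simp
  then show "ipos (Br w) q = iB (Max w) q"
    by (simp only: ipos_def iB_def Br_simps)
qed

lemma Br_ncol: "q < 4*Max w+4 \<Longrightarrow> ncol (Br w) (iB (Max w) q) = ncm (Max w) q"
  unfolding ncol_def iB_def ncm_def Br_simps by auto

lemma Br_FF: "q \<le> 4*Max w+4 \<Longrightarrow> FF (Br w) q = Tm (Max w) q"
proof (induction q)
  case 0
  then show ?case by (simp add: FF_0 Tm_def)
next
  case (Suc q)
  then have q: "q < 4*Max w+4" by simp
  show ?case using Suc q
    by (simp add: FF_Suc sg_def Br_ipos Br_ncol TmStep)
qed

lemma Br_delta:
  assumes s: "s < 4*Max w+4" and t: "t < 4*Max w+4"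
  shows "delta (Br w) (iB (Max w) s) (iB (Max w) t) = int (kap (Max w) t) - int (kap (Max w) s)"
proof (cases "s = t")
  case True
  then show ?thesis by (simp add: delta_def cint_def sigma_def)
next
  case False
  let ?m = "Max w"
  have a: "iB ?m s \<in> pts (Br w)" using ipos_pts[of s "Br w"] s by (simp add: Br_ipos Br_simps)
  have b: "iB ?m t \<in> pts (Br w)" using ipos_pts[of t "Br w"] t by (simp add: Br_ipos Br_simps)
  have ne: "iB ?m s \<noteq> iB ?m t" using ipos_eq_iff[of s "Br w" t] s t False by (simp add: Br_ipos Br_simps)
  have L: "FF (Br w) (LL (Br w)) = 0" by (simp add: Br_simps Br_FF TmL)
  have ps: "pos (Br w) (iB ?m s) = s" using pos_ipos[of s "Br w"] s by (simp add: Br_ipos Br_simps)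
  have pt: "pos (Br w) (iB ?m t) = t" using pos_ipos[of t "Br w"] t by (simp add: Br_ipos Br_simps)
  have "delta (Br w) (iB ?m s) (iB ?m t) =
      FF (Br w) (t + (if ncm ?m s = ncm ?m t then 1 else 0)) - FF (Br w) (Suc s)"
    using delta_eq[OF a b ne L] by (simp add: ps pt Br_ncol s t)
  also have "\<dots> = Tm ?m (t + (if ncm ?m s = ncm ?m t then 1 else 0)) - Tm ?m (Suc s)"
    using s t by (simp add: Br_FF)
  also have "\<dots> = int (kap ?m t) - int (kap ?m s)"
    using s t by (cases "ncm ?m s"; cases "ncm ?m t") (simp_all add: TmA TmB)
  finally show ?thesis .
qed

lemma iB_vals: "k \<le> m \<Longrightarrow> iB m (m-k) = (False, m-k) \<and> iB m (m+1+k) = (False, m+1+k) \<and>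
   iB m (3*m+2-k) = (True, m+1+k) \<and> iB m (3*m+3+k) = (True, m-k)"
  unfolding iB_def by auto

lemma Br_blocks:
  assumes fin: "finite w" and ne: "w \<noteq> {}"
  shows "B \<in> blocks (Br w) \<longleftrightarrow> (\<exists>k x y. TB (Max w) w k x y \<and> B = ch (Max w) x y)"
proof -
  let ?m = "Max w"
  have kle: "\<And>k. k \<in> w \<Longrightarrow> k \<le> ?m" using fin by simp
  have bl: "blocks (Br w) = {{(False, ?m - k), (False, ?m + 1 + k)} | k. k \<in> w}
      \<union> {{(True, ?m - k), (True, ?m + 1 + k)} | k. k \<in> w}
      \<union> {{(False, ?m - k), (True, ?m - k)} | k. k \<le> ?m \<and> k \<notin> w}
      \<union> {{(False, ?m + 1 + k), (True, ?m + 1 + k)} | k. k \<le> ?m \<and> k \<notin> w}"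
    by (simp add: Br_def Let_def)
  show ?thesis
  proof
    assume Bin: "B \<in> blocks (Br w)"
    from Bin consider (a) k where "k \<in> w" "B = {(False, ?m - k), (False, ?m + 1 + k)}"
      | (b) k where "k \<in> w" "B = {(True, ?m - k), (True, ?m + 1 + k)}"
      | (c) k where "k \<le> ?m" "k \<notin> w" "B = {(False, ?m - k), (True, ?m - k)}"
      | (d) k where "k \<le> ?m" "k \<notin> w" "B = {(False, ?m + 1 + k), (True, ?m + 1 + k)}"
    proof -
      have "(\<exists>k. B = {(False, ?m - k), (False, ?m + 1 + k)} \<and> k \<in> w) \<or>
            (\<exists>k. B = {(True, ?m - k), (True, ?m + 1 + k)} \<and> k \<in> w) \<or>
            (\<exists>k. B = {(False, ?m - k), (True, ?m - k)} \<and> k \<le> ?m \<and> k \<notin> w) \<or>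
            (\<exists>k. B = {(False, ?m + 1 + k), (True, ?m + 1 + k)} \<and> k \<le> ?m \<and> k \<notin> w)"
        using Bin unfolding bl by (simp only: Un_iff mem_Collect_eq disj_assoc)
      then show ?thesis using that by (elim disjE exE conjE) metis+
    qed
    then show "\<exists>k x y. TB ?m w k x y \<and> B = ch ?m x y"
    proof cases
      case a
      have k: "k \<le> ?m" using kle[OF a(1)] .
      have "TB ?m w k (?m-k) (?m+1+k)" using a k by (simp add: TB_def)
      moreover have "B = ch ?m (?m-k) (?m+1+k)" using a iB_vals[OF k] by (simp add: ch_def)
      ultimately show ?thesis by blast
    next
      case b
      have k: "k \<le> ?m" using kle[OF b(1)] .
      have "TB ?m w k (3*?m+2-k) (3*?m+3+k)" using b k by (simp add: TB_def)
      moreover have "B = ch ?m (3*?m+2-k) (3*?m+3+k)" using b iB_vals[OF k] by (simp add: ch_def insert_commute)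
      ultimately show ?thesis by blast
    next
      case c
      have "TB ?m w k (?m-k) (3*?m+3+k)" using c by (simp add: TB_def)
      moreover have "B = ch ?m (?m-k) (3*?m+3+k)" using c iB_vals[OF c(1)] by (simp add: ch_def)
      ultimately show ?thesis by blast
    next
      case d
      have "TB ?m w k (?m+1+k) (3*?m+2-k)" using d by (simp add: TB_def)
      moreover have "B = ch ?m (?m+1+k) (3*?m+2-k)" using d iB_vals[OF d(1)] by (simp add: ch_def)
      ultimately show ?thesis by blast
    qed
  next
    assume "\<exists>k x y. TB ?m w k x y \<and> B = ch ?m x y"
    then obtain k x y where T: "TB ?m w k x y" and B: "B = ch ?m x y" by blast
    have k: "k \<le> ?m" using T by (simp add: TB_def)
    have v: "iB ?m (?m-k) = (False, ?m-k)" "iB ?m (?m+1+k) = (False, ?m+1+k)"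
      "iB ?m (3*?m+2-k) = (True, ?m+1+k)" "iB ?m (3*?m+3+k) = (True, ?m-k)"
      using iB_vals[OF k] by auto
    from T consider (a) "k \<in> w" "x = ?m-k" "y = ?m+1+k" | (b) "k \<in> w" "x = 3*?m+2-k" "y = 3*?m+3+k"
      | (c) "k \<notin> w" "x = ?m-k" "y = 3*?m+3+k" | (d) "k \<notin> w" "x = ?m+1+k" "y = 3*?m+2-k"
      unfolding TB_def by blast
    then show "B \<in> blocks (Br w)"
    proof cases
      case a
      have eq: "B = {(False, ?m - k), (False, ?m + 1 + k)}" by (simp only: B ch_def a v insert_commute)
      have "B \<in> {{(False, ?m - k), (False, ?m + 1 + k)} | k. k \<in> w}"
        unfolding mem_Collect_eq by (rule exI[of _ k]) (use eq a k in simp)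
      then show ?thesis unfolding bl by blast
    next
      case b
      have eq: "B = {(True, ?m - k), (True, ?m + 1 + k)}" by (simp only: B ch_def b v insert_commute)
      have "B \<in> {{(True, ?m - k), (True, ?m + 1 + k)} | k. k \<in> w}"
        unfolding mem_Collect_eq by (rule exI[of _ k]) (use eq b k in simp)
      then show ?thesis unfolding bl by blast
    next
      case c
      have eq: "B = {(False, ?m - k), (True, ?m - k)}" by (simp only: B ch_def c v insert_commute)
      have "B \<in> {{(False, ?m - k), (True, ?m - k)} | k. k \<le> ?m \<and> k \<notin> w}"
        unfolding mem_Collect_eq by (rule exI[of _ k]) (use eq c k in simp)
      then show ?thesis unfolding bl by blast
    next
      case d
      have eq: "B = {(False, ?m + 1 + k), (True, ?m + 1 + k)}" by (simp only: B ch_def d v insert_commute)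
      have "B \<in> {{(False, ?m + 1 + k), (True, ?m + 1 + k)} | k. k \<le> ?m \<and> k \<notin> w}"
        unfolding mem_Collect_eq by (rule exI[of _ k]) (use eq d k in simp)
      then show ?thesis unfolding bl by blast
    qed
  qed
qed

lemma Br_pts: "q < 4*Max w+4 \<Longrightarrow> iB (Max w) q \<in> pts (Br w)"
  using ipos_pts[of q "Br w"] by (simp add: Br_ipos Br_simps)

lemma Br_cross:
  assumes "x < y" "y < 4*Max w+4" "u < v" "v < 4*Max w+4"
  shows "crosses (Br w) (ch (Max w) x y) (ch (Max w) u v) \<longleftrightarrow> cr x y u v"
  using cross_iff[of x y "Br w" u v] assms by (simp add: Br_ipos Br_simps ch_def cr_def)

lemma Br_dd:
  assumes T1: "TB (Max w) w k x y" and T2: "TB (Max w) w j u v"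
  shows "dd (Br w) (ch (Max w) x y) (ch (Max w) u v) = nat \<bar>int j - int k\<bar>"
proof -
  have g1: "x < y \<and> y < 4*Max w+4 \<and> kap (Max w) x = k \<and> kap (Max w) y = k" using TB_good[OF T1] by simp
  have g2: "u < v \<and> v < 4*Max w+4 \<and> kap (Max w) u = j \<and> kap (Max w) v = j" using TB_good[OF T2] by simp
  have "dd (Br w) {ipos (Br w) x, ipos (Br w) y} {ipos (Br w) u, ipos (Br w) v} = nat \<bar>int j - int k\<bar>"
  proof (rule dd_prop[where P = "\<lambda>z. z = nat \<bar>int j - int k\<bar>"])
    fix s t assume s: "s \<in> {x, y}" and t: "t \<in> {u, v}"
    have s': "s < 4*Max w+4" "kap (Max w) s = k" using s g1 by auto
    have t': "t < 4*Max w+4" "kap (Max w) t = j" using t g2 by auto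
    show "nat \<bar>delta (Br w) (ipos (Br w) s) (ipos (Br w) t)\<bar> = nat \<bar>int j - int k\<bar>"
      using Br_delta[OF s'(1) t'(1)] s' t' by (simp add: Br_ipos)
  qed
  then show ?thesis by (simp add: Br_ipos ch_def)
qed

lemma Br_blocksE:
  assumes "finite w" "w \<noteq> {}" "B \<in> blocks (Br w)"
  obtains k x y where "TB (Max w) w k x y" "B = ch (Max w) x y"
proof -
  have "\<exists>k x y. TB (Max w) w k x y \<and> B = ch (Max w) x y"
    using Br_blocks[OF assms(1,2)] assms(3) by (rule iffD1)
  then obtain k x y where "TB (Max w) w k x y" "B = ch (Max w) x y" by (elim exE conjE)
  then show ?thesis by (rule that)
qed

lemma Br_blocksI:
  assumes "finite w" "w \<noteq> {}" "TB (Max w) w k x y"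
  shows "ch (Max w) x y \<in> blocks (Br w)"
  unfolding Br_blocks[OF assms(1,2)] using assms(3) by blast

lemma Br_S0:
  assumes fin: "finite w" and ne: "w \<noteq> {}"
  shows "S0 (Br w)"
proof -
  let ?m = "Max w"
  have sub: "B \<noteq> {} \<and> B \<subseteq> pts (Br w)" if Bin: "B \<in> blocks (Br w)" for B
  proof -
    obtain k x y where T: "TB ?m w k x y" and B: "B = ch ?m x y"
      using Br_blocksE[OF fin ne Bin] .
    have "x < 4*?m+4" "y < 4*?m+4" using TB_good[OF T] by auto
    then have "iB ?m x \<in> pts (Br w)" "iB ?m y \<in> pts (Br w)" using Br_pts by auto
    then show ?thesis unfolding B ch_def by simp
  qed
  have cov: "pts (Br w) \<subseteq> \<Union>(blocks (Br w))"
  proof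
    fix z assume z: "z \<in> pts (Br w)"
    have "z \<in> iB ?m ` {..<4*?m+4}" using z pts_eq[of "Br w"] by (simp only: Br_ipos Br_simps)
    then obtain q where q: "q < 4*?m+4" "z = iB ?m q" by blast
    obtain k x y where T: "TB ?m w k x y" and qq: "q = x \<or> q = y" using TB_cover[OF q(1)] by blast
    have "ch ?m x y \<in> blocks (Br w)" using Br_blocksI[OF fin ne T] .
    moreover have "z \<in> ch ?m x y" using qq q by (auto simp: ch_def)
    ultimately show "z \<in> \<Union>(blocks (Br w))" by blast
  qed
  have disj: "B \<inter> B' = {}" if H: "B \<in> blocks (Br w)" "B' \<in> blocks (Br w)" "B \<noteq> B'" for B B'
  proof (rule ccontr)
    assume ne': "B \<inter> B' \<noteq> {}"
    obtain k x y where T: "TB ?m w k x y" and B: "B = ch ?m x y"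
      using Br_blocksE[OF fin ne H(1)] .
    obtain j u v where T': "TB ?m w j u v" and B': "B' = ch ?m u v"
      using Br_blocksE[OF fin ne H(2)] .
    have g: "x < 4*?m+4" "y < 4*?m+4" "u < 4*?m+4" "v < 4*?m+4"
      using TB_good[OF T] TB_good[OF T'] by auto
    have inj: "\<And>a b. a < 4*?m+4 \<Longrightarrow> b < 4*?m+4 \<Longrightarrow> iB ?m a = iB ?m b \<longleftrightarrow> a = b"
      using ipos_eq_iff[of _ "Br w"] by (simp add: Br_ipos Br_simps)
    obtain z where z: "z \<in> B" "z \<in> B'" using ne' by blast
    have "x = u \<or> x = v \<or> y = u \<or> y = v"
    proof -
      have "z = iB ?m x \<or> z = iB ?m y" "z = iB ?m u \<or> z = iB ?m v" using z B B' by (auto simp: ch_def)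
      then show ?thesis using inj g by metis
    qed
    then have "x = u \<and> y = v" using TB_meet[OF T T'] by blast
    then show False using H(3) B B' by simp
  qed
  have part: "is_partition (Br w)"
    unfolding is_partition_def using sub cov disj by blast
  have p2: "P2nb (Br w)"
    unfolding P2nb_def
  proof (intro conjI part ballI)
    fix B assume "B \<in> blocks (Br w)"
    then obtain k x y where T: "TB ?m w k x y" and B: "B = ch ?m x y"
      using Br_blocksE[OF fin ne] by blast
    have g: "x < y" "y < 4*?m+4" "ncm ?m x \<noteq> ncm ?m y" using TB_good[OF T] by auto
    have "\<exists>a b. {ipos (Br w) x, ipos (Br w) y} = {a, b} \<and> a \<noteq> b \<and> ncol (Br w) a \<noteq> ncol (Br w) b"
      using g by (intro chord_P2) (simp_all add: Br_simps Br_ipos Br_ncol)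
    then show "\<exists>a b. B = {a, b} \<and> a \<noteq> b \<and> ncol (Br w) a \<noteq> ncol (Br w) b"
      by (simp add: B ch_def Br_ipos)
  qed
  have sig: "sigma (Br w) (oint (Br w) a b) = 0"
    if H: "B \<in> blocks (Br w)" "a \<in> B" "b \<in> B" "a \<noteq> b" for B a b
  proof -
    obtain k x y where T: "TB ?m w k x y" and B: "B = ch ?m x y"
      using Br_blocksE[OF fin ne H(1)] .
    have g: "x < y" "y < 4*?m+4" "kap ?m x = k" "kap ?m y = k" "ncm ?m x \<noteq> ncm ?m y"
      using TB_good[OF T] by auto
    have c: "ncol (Br w) (iB ?m x) \<noteq> ncol (Br w) (iB ?m y)" using g by (simp add: Br_ncol)
    have d1: "delta (Br w) (iB ?m x) (iB ?m y) = 0" using Br_delta[of x w y] g by simp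
    have d2: "delta (Br w) (iB ?m y) (iB ?m x) = 0" using Br_delta[of y w x] g by simp
    have "(a = iB ?m x \<and> b = iB ?m y) \<or> (a = iB ?m y \<and> b = iB ?m x)"
      using H(2-4) B by (auto simp: ch_def)
    moreover have "sigma (Br w) (oint (Br w) (iB ?m x) (iB ?m y)) = 0"
      using d1 c by (simp add: delta_def)
    moreover have "sigma (Br w) (oint (Br w) (iB ?m y) (iB ?m x)) = 0"
      using d2 c by (simp add: delta_def)
    ultimately show ?thesis by metis
  qed
  show ?thesis unfolding S0_def using p2 sig by blast
qed

lemma Br_ID:
  assumes fin: "finite w" and ne: "w \<noteq> {}"
  shows "Br w \<in> ID D \<longleftrightarrow> completion w \<inter> D = {}"
proof
  let ?m = "Max w"
  assume I: "Br w \<in> ID D"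
  show "completion w \<inter> D = {}"
  proof (rule ccontr)
    assume "completion w \<inter> D \<noteq> {}"
    then obtain k j where kj: "k \<in> w" "j \<notin> w" "j < k" "k - j \<in> D"
      unfolding completion_def by blast
    have k: "k \<le> ?m" using fin kj(1) by simp
    have T1: "TB ?m w k (?m-k) (?m+1+k)" using kj k by (simp add: TB_def)
    have T2: "TB ?m w j (?m-j) (3*?m+3+j)" using kj k by (simp add: TB_def)
    have B1: "ch ?m (?m-k) (?m+1+k) \<in> blocks (Br w)" using Br_blocksI[OF fin ne T1] .
    have B2: "ch ?m (?m-j) (3*?m+3+j) \<in> blocks (Br w)" using Br_blocksI[OF fin ne T2] .
    have c: "crosses (Br w) (ch ?m (?m-k) (?m+1+k)) (ch ?m (?m-j) (3*?m+3+j))"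
      using kj k by (subst Br_cross) (auto simp: cr_def)
    have dv: "dd (Br w) (ch ?m (?m-k) (?m+1+k)) (ch ?m (?m-j) (3*?m+3+j)) = k - j"
      using Br_dd[OF T1 T2] kj by simp
    have A: "\<forall>B\<in>blocks (Br w). \<forall>B'\<in>blocks (Br w). crosses (Br w) B B' \<longrightarrow> dd (Br w) B B' \<notin> D"
      using I unfolding ID_def by blast
    then have "dd (Br w) (ch ?m (?m-k) (?m+1+k)) (ch ?m (?m-j) (3*?m+3+j)) \<notin> D"
      using B1 B2 c by blast
    then show False using dv kj(4) by simp
  qed
next
  let ?m = "Max w"
  assume C: "completion w \<inter> D = {}"
  have "dd (Br w) B B' \<notin> D" if H: "B \<in> blocks (Br w)" "B' \<in> blocks (Br w)" "crosses (Br w) B B'" for B B'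
  proof -
    obtain k x y where T: "TB ?m w k x y" and B: "B = ch ?m x y"
      using Br_blocksE[OF fin ne H(1)] .
    obtain j u v where T': "TB ?m w j u v" and B': "B' = ch ?m u v"
      using Br_blocksE[OF fin ne H(2)] .
    have g: "x < y" "y < 4*?m+4" "u < v" "v < 4*?m+4"
      using TB_good[OF T] TB_good[OF T'] by auto
    have "cr x y u v" using H(3) Br_cross[OF g] B B' by simp
    then have o: "(k \<in> w \<and> j \<notin> w \<and> j < k) \<or> (j \<in> w \<and> k \<notin> w \<and> k < j)"
      using TB_cross[OF T T'] by blast
    have dv: "dd (Br w) B B' = nat \<bar>int j - int k\<bar>" using Br_dd[OF T T'] B B' by simp
    have "dd (Br w) B B' \<in> completion w"
      using o
    proof
      assume h: "k \<in> w \<and> j \<notin> w \<and> j < k"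
      then have "dd (Br w) B B' = k - j" using dv by simp
      then show ?thesis using h unfolding completion_def by blast
    next
      assume h: "j \<in> w \<and> k \<notin> w \<and> k < j"
      then have "dd (Br w) B B' = j - k" using dv by simp
      then show ?thesis using h unfolding completion_def by blast
    qed
    then show ?thesis using C by blast
  qed
  then show "Br w \<in> ID D" unfolding ID_def using Br_S0[OF fin ne] by blast
qed

lemma partB: "{w. bracket_pattern w \<and> Br w \<in> ID D} = WM (D \<union> {0})"
proof (rule set_eqI)
  fix w
  have z: "0 \<notin> completion w" unfolding completion_def by auto
  then have e: "completion w \<subseteq> - (D \<union> {0}) \<longleftrightarrow> completion w \<inter> D = {}" by blast
  show "w \<in> {w. bracket_pattern w \<and> Br w \<in> ID D} \<longleftrightarrow> w \<in> WM (D \<union> {0})"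
  proof (cases "bracket_pattern w")
    case True
    then have "finite w" "w \<noteq> {}" by (auto simp: bracket_pattern_def)
    then show ?thesis using True Br_ID[of w D] e by (simp add: WM_def)
  next
    case False
    then show ?thesis by (simp add: WM_def)
  qed
qed
theorem lemma8p1:
  fixes D :: "nat set"
  assumes "subsemigroup D"
  shows "(hpart \<notin> ID D \<longleftrightarrow> 0 \<in> D)
         \<and> {w. bracket_pattern w \<and> Br w \<in> ID D} = WM (D \<union> {0})"
  using partA partB by blast

end
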